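(* Let $H$ denote the Hilbert transform on $\mathbb{R}$ normalized so that $H(\chi_{(0,1)})(y)=\log\frac{|y|}{|y-1|}$, and let $H^{*}g(x)=\sup_{\epsilon>0}\big|\int_{|x-y|>\epsilon}\frac{g(y)}{x-y}\,dy\big|$ be the associated maximal operator (same normalization). Let $f=\chi_{(0,1)}$. Then there exist constants $m>1$ and $C>0$ such that $$H^{*}(Hf)(x)\ge C\,\frac{\log x}{x}\qquad\text{for all }x>m.$$ *)

theory Defs
  imports "HOL-Analysis.Analysis"
begin

definition hilbert_trunc :: "(real \<Rightarrow> real) \<Rightarrow> real \<Rightarrow> real \<Rightarrow> real" where
  "hilbert_trunc g eps x = (LINT y:{y. \<bar>x - y\<bar> > eps}|lborel. g y / (x - y))"

definition hilbert :: "(real \<Rightarrow> real) \<Rightarrow> real \<Rightarrow> real" where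
  "hilbert g x = Lim (at_right 0) (\<lambda>eps. hilbert_trunc g eps x)"

definition hilbert_max :: "(real \<Rightarrow> real) \<Rightarrow> real \<Rightarrow> ereal" where
  "hilbert_max g x = (SUP eps\<in>{0<..}. ereal \<bar>hilbert_trunc g eps x\<bar>)"

end

theory Submission imports Defs begin

lemma Hf_val:
  fixes y :: real
  assumes "y < 0 \<or> y > 1"
  shows "hilbert (indicator {0<..<1}) y = ln \<bar>y\<bar> - ln \<bar>y - 1\<bar>"
proof -
  define d where "d = (if y < 0 then -y else y - 1)"
  have d: "d > 0" using assms by (auto simp: d_def)
  have FTC: "(LBINT t=ereal 0..ereal 1. 1 / (y - t)) = ln \<bar>y\<bar> - ln \<bar>y - 1\<bar>"
  proof (cases "y < 0")
    case True
    have "(LBINT t=ereal 0..ereal 1. 1 / (y - t)) = (\<lambda>t. - ln (t - y)) 1 - (\<lambda>t. - ln (t - y)) 0"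
      by (rule interval_integral_FTC_finite[where F="\<lambda>t. - ln (t - y)"])
        (use True in \<open>auto intro!: continuous_intros derivative_eq_intros
           simp flip: has_real_derivative_iff_has_vector_derivative simp: field_simps\<close>)
    then show ?thesis using True by simp
  next
    case False
    then have y1: "y > 1" using assms by auto
    have "(LBINT t=ereal 0..ereal 1. 1 / (y - t)) = (\<lambda>t. - ln (y - t)) 1 - (\<lambda>t. - ln (y - t)) 0"
      by (rule interval_integral_FTC_finite[where F="\<lambda>t. - ln (y - t)"])
        (use y1 in \<open>auto intro!: continuous_intros derivative_eq_intros
           simp flip: has_real_derivative_iff_has_vector_derivative simp: field_simps\<close>)
    then show ?thesis using y1 by simp
  qed
  have I: "(LINT t:{0<..<1}|lborel. 1 / (y - t)) = ln \<bar>y\<bar> - ln \<bar>y - 1\<bar>"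
    using FTC by (simp add: interval_lebesgue_integral_def)
  have ev: "hilbert_trunc (indicator {0<..<1}) eps y = ln \<bar>y\<bar> - ln \<bar>y - 1\<bar>"
    if "0 < eps" "eps < d" for eps
  proof -
    have "hilbert_trunc (indicator {0<..<1}) eps y = (LINT t:{0<..<1}|lborel. 1 / (y - t))"
      unfolding hilbert_trunc_def set_lebesgue_integral_def
    proof (rule Bochner_Integration.integral_cong[OF refl])
      fix t :: real
      show "indicator {t. eps < \<bar>y - t\<bar>} t *\<^sub>R (indicator {0<..<1} t / (y - t)) =
            indicator {0<..<1} t *\<^sub>R (1 / (y - t))"
        using that assms by (auto simp: d_def indicator_def split: if_splits)
    qed
    then show ?thesis using I by simp
  qed
  have "eventually (\<lambda>eps. hilbert_trunc (indicator {0<..<1}) eps y = ln \<bar>y\<bar> - ln \<bar>y - 1\<bar>) (at_right 0)"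
    unfolding eventually_at_right[OF d] using ev d by blast
  then have "((\<lambda>eps. hilbert_trunc (indicator {0<..<1}) eps y) \<longlongrightarrow> ln \<bar>y\<bar> - ln \<bar>y - 1\<bar>) (at_right 0)"
    by (rule tendsto_eventually)
  then show ?thesis unfolding hilbert_def by (intro tendsto_Lim) auto
qed


lemma inv_sq_integrable:
  "integrable lborel (\<lambda>y::real. indicator {1..} y * (4 / y^2))"
proof -
  have "(\<lambda>y::real. 1 / y ^ 2) integrable_on {1..}"
    using has_integral_inverse_power_to_inf[of 2 1] unfolding integrable_on_def by auto
  hence "(\<lambda>y::real. 1 / y ^ 2) absolutely_integrable_on {1..}"
    by (subst absolutely_integrable_on_iff_nonneg) auto
  from integrable_mult_right[OF this [unfolded set_integrable_def], of 4]
  show ?thesis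
    by (subst (asm) integrable_completion) (auto simp: mult_ac)
qed

lemma inv_sq_integrable':
  "integrable lborel (\<lambda>y::real. indicator {1..} (-y) * (4 / (-y)^2))"
proof -
  have "integrable lborel (\<lambda>y::real. (\<lambda>y. indicator {1..} y * (4 / y^2)) (0 + (-1) * y))"
    using inv_sq_integrable by (subst lborel_integrable_real_affine_iff) auto
  then show ?thesis by simp
qed

lemma psi_int:
  fixes x :: real assumes x: "x > 1"
  shows "set_integrable lborel {-x<..<-1} (\<lambda>y. 1 / (4 * x * y))"
    and "(LINT y:{-x<..<-1}|lborel. 1 / (4 * x * y)) = - ln x / (4 * x)"
proof -
  have c: "continuous_on {-x..-1} (\<lambda>y. 1 / (4 * x * y))"
    using x by (auto intro!: continuous_intros)
  show "set_integrable lborel {-x<..<-1} (\<lambda>y. 1 / (4 * x * y))"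
    by (rule set_integrable_subset[OF borel_integrable_atLeastAtMost'[OF c]]) auto
  have "(LBINT y=ereal (-x)..ereal (-1). 1 / (4 * x * y)) =
      (\<lambda>y. ln (-y) / (4 * x)) (-1) - (\<lambda>y. ln (-y) / (4 * x)) (-x)"
    by (rule interval_integral_FTC_finite[where F="\<lambda>y. ln (-y) / (4 * x)"])
      (use x in \<open>auto intro!: continuous_intros derivative_eq_intros
           simp flip: has_real_derivative_iff_has_vector_derivative simp: field_simps\<close>)
  then show "(LINT y:{-x<..<-1}|lborel. 1 / (4 * x * y)) = - ln x / (4 * x)"
    using x by (simp add: interval_lebesgue_integral_def)
qed

theorem mainTheorem8:
  shows "\<exists>m>1. \<exists>C>0. \<forall>x>m.
    ereal (C * ln x / x) \<le> hilbert_max (hilbert (indicator {0<..<1})) x"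
proof (rule exI[of _ 2], intro conjI exI[of _ "1/4"] allI impI)
  fix x :: real assume x2: "x > 2"
  define g where "g y = ln \<bar>y\<bar> - ln \<bar>y - 1\<bar>" for y :: real
  define \<phi> where "\<phi> y = g y / (x - y)" for y
  define R where "R = {y::real. x + 1 < \<bar>x - y\<bar>}"
  have R: "R = {..<-1} \<union> {2*x+1<..}" using x2 by (auto simp: R_def)
  have Rs: "R \<in> sets lborel" unfolding R by simp
  have ht: "hilbert_trunc (hilbert (indicator {0<..<1})) (x + 1) x = (LINT y:R|lborel. \<phi> y)"
    unfolding hilbert_trunc_def R_def[symmetric]
    by (rule set_lebesgue_integral_cong[OF Rs]) (use x2 in \<open>auto simp: R \<phi>_def g_def Hf_val\<close>)
  have neg1: "g y \<le> - 1 / (1 - y)" if "y < -1" for y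
  proof -
    have "g y = ln (-y) - ln (1 - y)" using that by (simp add: g_def)
    also have "\<dots> = ln ((-y) / (1 - y))" using that by (subst ln_div) auto
    also have "\<dots> \<le> (-y) / (1 - y) - 1" using that by (intro ln_le_minus_one) (auto intro!: divide_neg_pos)
    also have "\<dots> = - 1 / (1 - y)" using that by (simp add: field_simps)
    finally show ?thesis .
  qed
  have bnd1: "\<bar>g y\<bar> \<le> 1 / (-y)" if "y < -1" for y
  proof -
    have "g y = - (ln (1 - y) - ln (-y))" using that by (simp add: g_def)
    also have "\<dots> = - ln ((1 - y) / (-y))" using that by (subst ln_div) auto
    also have "(1 - y) / (-y) = 1 + 1 / (-y)" using that by (simp add: field_simps)
    finally have "g y = - ln (1 + 1 / (-y))" .
    moreover have "ln (1 + 1 / (-y)) \<le> 1 / (-y)" using that by (intro ln_add_one_self_le_self) auto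
    moreover have "ln (1 + 1 / (-y)) \<ge> 0" using that by auto
    ultimately show ?thesis by simp
  qed
  have bnd2: "\<bar>g y\<bar> \<le> 2 / y" and pos2: "g y > 0" if "y > 2" for y
  proof -
    have "g y = ln y - ln (y - 1)" using that by (simp add: g_def)
    also have "\<dots> = ln (y / (y - 1))" using that by (subst ln_div) auto
    also have "y / (y - 1) = 1 + 1 / (y - 1)" using that by (simp add: field_simps)
    finally have "g y = ln (1 + 1 / (y - 1))" .
    moreover have "ln (1 + 1 / (y - 1)) \<le> 1 / (y - 1)" using that by (intro ln_add_one_self_le_self) auto
    moreover have "ln (1 + 1 / (y - 1)) > 0" using that by (intro ln_gt_zero) simp
    moreover have "1 / (y - 1) \<le> 2 / y" using that by (simp add: field_simps)
    ultimately show "\<bar>g y\<bar> \<le> 2 / y" "g y > 0" by simp_all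
  qed
  have meas: "(\<lambda>y. indicator R y *\<^sub>R \<phi> y) \<in> borel_measurable lborel"
    unfolding \<phi>_def g_def using Rs by measurable
  have integ: "set_integrable lborel R \<phi>"
    unfolding set_integrable_def
  proof (rule Bochner_Integration.integrable_bound[OF _ meas AE_I2])
    show "integrable lborel (\<lambda>y::real. indicator {1..} y * (4 / y^2) + indicator {1..} (-y) * (4 / (-y)^2))"
      using inv_sq_integrable inv_sq_integrable' by (rule Bochner_Integration.integrable_add)
  next
    fix y :: real
    show "norm (indicator R y *\<^sub>R \<phi> y) \<le>
      norm (indicator {1..} y * (4 / y^2) + indicator {1..} (-y) * (4 / (-y)^2))"
    proof (cases "y \<in> R")
      case False then show ?thesis by (simp add: indicator_def)
    next
      case True
      then consider "y < -1" | "y > 2*x+1" unfolding R by auto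
      then show ?thesis
      proof cases
        case 1
        have "\<bar>\<phi> y\<bar> = \<bar>g y\<bar> / (x - y)" using 1 x2 by (simp add: \<phi>_def abs_div)
        also have "\<dots> \<le> (1 / (-y)) / (-y)"
          using 1 x2 bnd1[OF 1] by (intro frac_le) auto
        also have "\<dots> = 1 / y^2" using 1 by (simp add: field_simps power2_eq_square)
        also have "\<dots> \<le> 4 / y^2" using 1 by (intro divide_right_mono) auto
        finally show ?thesis using 1 True by (simp add: indicator_def)
      next
        case 2
        have "\<bar>\<phi> y\<bar> = \<bar>g y\<bar> / (y - x)" using 2 x2 by (simp add: \<phi>_def abs_div abs_minus_commute)
        also have "\<dots> \<le> (2 / y) / (y / 2)"
          using 2 x2 bnd2[of y] by (intro frac_le) auto
        also have "\<dots> = 4 / y^2" using 2 x2 by (simp add: field_simps power2_eq_square)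
        finally show ?thesis using 2 x2 True by (simp add: indicator_def)
      qed
    qed
  qed
  define S where "S = {-x<..<-1}"
  have pw: "indicator R y *\<^sub>R \<phi> y \<le> indicator S y *\<^sub>R (1 / (4 * x * y))" for y
  proof (cases "y \<in> R")
    case False
    then have "y \<notin> S" unfolding R S_def by auto
    then show ?thesis using False by simp
  next
    case True
    then consider "y < -1" | "y > 2*x+1" unfolding R by auto
    then show ?thesis
    proof cases
      case 1
      have gneg: "g y \<le> - 1 / (1 - y)" by (rule neg1[OF 1])
      show ?thesis
      proof (cases "y \<in> S")
        case False
        have "- 1 / (1 - y) < 0" using 1 by (intro divide_neg_pos) auto
        then have "g y < 0" using gneg by linarith
        then have "\<phi> y \<le> 0" using 1 x2 unfolding \<phi>_def by (simp add: divide_nonpos_pos)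
        then show ?thesis using True False by simp
      next
        case inS: True
        have "- 1 / (1 - y) \<le> - 1 / (2 * (-y))" using 1 by (simp add: field_simps)
        then have ga: "g y \<le> - 1 / (2 * (-y))" using gneg by linarith
        have "\<phi> y \<le> (- 1 / (2 * (-y))) / (x - y)"
          unfolding \<phi>_def using ga 1 x2 by (intro divide_right_mono) auto
        also have "\<dots> \<le> (- 1 / (2 * (-y))) / (2 * x)"
          using 1 x2 inS unfolding S_def
          by (intro divide_left_mono_neg) (auto simp: field_simps)
        also have "\<dots> = 1 / (4 * x * y)" using 1 x2 by (simp add: field_simps)
        finally show ?thesis using True inS by simp
      qed
    next
      case 2
      have "y \<notin> S" using 2 x2 unfolding S_def by auto
      moreover have "\<phi> y \<le> 0" using 2 x2 pos2[of y] unfolding \<phi>_def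
        by (intro divide_nonneg_neg) auto
      ultimately show ?thesis using True by simp
    qed
  qed
  have "(LINT y:R|lborel. \<phi> y) \<le> (LINT y:S|lborel. 1 / (4 * x * y))"
    unfolding set_lebesgue_integral_def
    using integ psi_int(1)[of x] x2 pw unfolding set_integrable_def S_def
    by (intro integral_mono) auto
  also have "\<dots> = - ln x / (4 * x)" using psi_int(2)[of x] x2 by (simp add: S_def)
  finally have le: "(LINT y:R|lborel. \<phi> y) \<le> - ln x / (4 * x)" .
  have "1 / 4 * ln x / x \<le> \<bar>hilbert_trunc (hilbert (indicator {0<..<1})) (x + 1) x\<bar>"
    using le unfolding ht by (simp add: field_simps)
  then have "ereal (1 / 4 * ln x / x) \<le> ereal \<bar>hilbert_trunc (hilbert (indicator {0<..<1})) (x + 1) x\<bar>"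
    by simp
  also have "\<dots> \<le> hilbert_max (hilbert (indicator {0<..<1})) x"
    unfolding hilbert_max_def using x2 by (intro SUP_upper) auto
  finally show "ereal (1 / 4 * ln x / x) \<le> hilbert_max (hilbert (indicator {0<..<1})) x"
    by simp
qed (simp_all)

end
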